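(* Let $p_0,p_1,\dots,p_{n-1}$ ($n\ge 3$) be distinct points in $\mathbb{R}^2$, indices taken modulo $n$ (so $p_n=p_0$), such that $P=\bigcup_{i=1}^n I_i$, $I_i=[p_{i-1},p_i]$, is a simple closed $n$-gon. For $1\le i\le n$ let $u_i$ be the unit vector perpendicular to the line $\mathrm{aff}\, I_i$ oriented so that for every $b\in\mathrm{relint}\, I_i$ and all sufficiently small $\varepsilon>0$ one has $b+\varepsilon u_i\in\mathrm{ext}P$ and $b-\varepsilon u_i\in\mathrm{int}P$, and put $u_{i,i+1}=u_i+u_{i+1}$ (with $u_{n+1}=u_1$). Then for every sufficiently small $\varepsilon>0$ we have $p_i+\varepsilon u_{i,i+1}\in\mathrm{ext}P$ and $p_i-\varepsilon u_{i,i+1}\in\mathrm{int}P$ for all $1\le i\le n$.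
   Context: A simple closed $n$-gon is a polygon $P=\bigcup_{i=1}^n[p_{i-1},p_i]$ with $n$ distinct vertices $p_0,\dots,p_{n-1}$, $p_n=p_0$, whose edges intersect only in the common endpoints of consecutive edges ($[p_{i-1},p_i]\cap[p_i,p_{i+1}]=\{p_i\}$, $[p_0,p_1]\cap[p_{n-1},p_0]=\{p_0\}$, and non-consecutive edges are disjoint). $\mathbb{R}^2\setminus P$ has exactly two connected components; the bounded one is $\mathrm{int}P$ (interior), the unbounded one is $\mathrm{ext}P$ (exterior), and $P$ is the boundary of each. $\mathrm{relint}$ denotes relative interior, $\mathrm{aff}$ affine hull. *)

theory Defs
  imports "HOL-Analysis.Analysis"
begin

definition poly_edge :: "nat \<Rightarrow> (nat \<Rightarrow> real^2) \<Rightarrow> nat \<Rightarrow> (real^2) set" where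
  "poly_edge n p i = closed_segment (p ((i + n - 1) mod n)) (p (i mod n))"

definition polygon_set :: "nat \<Rightarrow> (nat \<Rightarrow> real^2) \<Rightarrow> (real^2) set" where
  "polygon_set n p = (\<Union>i\<in>{1..n}. poly_edge n p i)"

definition simple_polygon :: "nat \<Rightarrow> (nat \<Rightarrow> real^2) \<Rightarrow> bool" where
  "simple_polygon n p \<longleftrightarrow>
     3 \<le> n \<and> inj_on p {..<n} \<and>
     (\<forall>i\<in>{1..n}. poly_edge n p i \<inter> poly_edge n p (i mod n + 1) = {p (i mod n)}) \<and>
     (\<forall>i\<in>{1..n}. \<forall>j\<in>{1..n}. i \<noteq> j \<and> j \<noteq> i mod n + 1 \<and> i \<noteq> j mod n + 1 \<longrightarrow>
          poly_edge n p i \<inter> poly_edge n p j = {})"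

end

theory Submission imports Defs begin

lemma transfer:
  fixes S P :: "'a::real_normed_vector set"
  assumes "convex S" "S \<inter> P = {}" "x \<in> S" "y \<in> S"
  shows "(x \<in> outside P \<longleftrightarrow> y \<in> outside P) \<and> (x \<in> inside P \<longleftrightarrow> y \<in> inside P)"
proof -
  have "connected_component (-P) x y" unfolding connected_component_def
    using assms by (intro exI[of _ S]) (auto intro: convex_connected)
  hence "connected_component_set (-P) y = connected_component_set (-P) x"
    by (intro connected_component_eq) simp
  moreover have "x \<notin> P" "y \<notin> P" using assms by auto
  ultimately show ?thesis unfolding inside_def outside_def by auto
qed

lemma seg_left: "y \<in> closed_segment w v \<Longrightarrow> \<exists>t. y - v = t *\<^sub>R (w - v)"
proof -
  assume "y \<in> closed_segment w v"
  then obtain a where "y = (1 - a) *\<^sub>R w + a *\<^sub>R v" unfolding in_segment by blast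
  hence "y - v = (1 - a) *\<^sub>R (w - v)" by (simp add: algebra_simps)
  thus ?thesis by blast
qed

lemma seg_right: "y \<in> closed_segment v z \<Longrightarrow> \<exists>t\<ge>0. t \<le> 1 \<and> y - v = t *\<^sub>R (z - v)"
  unfolding in_segment by (auto simp: algebra_simps)

lemma A1: "0 < n \<Longrightarrow> (i mod n + 1 + n - 1) mod n = i mod n" for n i :: nat by simp
lemma A2: "2 \<le> n \<Longrightarrow> i \<in> {1..n} \<Longrightarrow> (i + n - 1) mod n \<noteq> i mod n" for n i :: nat
proof -
  assume a: "2 \<le> n" "i \<in> {1..n}"
  show ?thesis
  proof (cases "i = n")
    case True
    have "n + n - 1 = (n - 1) + n" using a by simp
    hence "(i + n - 1) mod n = ((n - 1) + n) mod n" using True by simp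
    also have "... = n - 1" using a by (subst mod_add_self2) simp
    finally have "(i + n - 1) mod n = n - 1" .
    thus ?thesis using True a by simp
  next
    case False
    hence "i < n" "1 \<le> i" using a by auto
    hence "(i + n - 1) mod n = i - 1" by (metis Nat.add_diff_assoc2 Suc_pred' le_add_diff_inverse2 less_imp_diff_less mod_add_self2 mod_less add.commute le_less_Suc_eq)
    thus ?thesis using \<open>i < n\<close> \<open>1 \<le> i\<close> by simp
  qed
qed
lemma A3: "2 \<le> n \<Longrightarrow> (m + 1) mod n \<noteq> m" if "m < n" for n m :: nat
  using that by (cases "m + 1 = n") auto

lemma vertex_local:
  fixes v w z u1 u2 :: "'a::euclidean_space"
  assumes K: "closed K" "v \<notin> K"
    and PK: "P \<subseteq> closed_segment w v \<union> closed_segment v z \<union> K"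
    and wv: "w \<noteq> v" and zv: "z \<noteq> v"
    and n1: "norm u1 = 1" and n2: "norm u2 = 1"
    and o1: "u1 \<bullet> (v - w) = 0" and o2: "u2 \<bullet> (z - v) = 0"
    and h1: "\<forall>b\<in>open_segment w v. \<exists>\<delta>>0. \<forall>\<epsilon>. 0 < \<epsilon> \<and> \<epsilon> < \<delta> \<longrightarrow>
               b + \<epsilon> *\<^sub>R u1 \<in> outside P \<and> b - \<epsilon> *\<^sub>R u1 \<in> inside P"
    and h2: "\<forall>b\<in>open_segment v z. \<exists>\<delta>>0. \<forall>\<epsilon>. 0 < \<epsilon> \<and> \<epsilon> < \<delta> \<longrightarrow>
               b + \<epsilon> *\<^sub>R u2 \<in> outside P \<and> b - \<epsilon> *\<^sub>R u2 \<in> inside P"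
  shows "\<exists>\<delta>>0. \<forall>\<epsilon>. 0 < \<epsilon> \<and> \<epsilon> < \<delta> \<longrightarrow>
           v + \<epsilon> *\<^sub>R (u1 + u2) \<in> outside P \<and> v - \<epsilon> *\<^sub>R (u1 + u2) \<in> inside P"
proof -
  obtain r where r: "r > 0" "ball v r \<subseteq> -K"
    using K open_contains_ball[of "-K"] by (auto simp: open_Compl)
  define k1 where "k1 = u1 \<bullet> (z - v)"
  define c where "c = u1 \<bullet> u2"
  have o1': "u1 \<bullet> (w - v) = 0" using o1 by (simp add: inner_diff_right)
  have uu1: "u1 \<bullet> u1 = 1" using n1 by (simp add: norm_eq_1)
  have uu2: "u2 \<bullet> u2 = 1" using n2 by (simp add: norm_eq_1)
  have cabs: "\<bar>c\<bar> \<le> 1" unfolding c_def using Cauchy_Schwarz_ineq2[of u1 u2] n1 n2 by simp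
  have D: "u1 \<bullet> y = u1 \<bullet> v \<or> (u2 \<bullet> y = u2 \<bullet> v \<and> (\<exists>t\<ge>0. t \<le> 1 \<and> u1 \<bullet> y = u1 \<bullet> v + t * k1))"
    if "y \<in> ball v r" "y \<in> P" for y
  proof -
    have "y \<notin> K" using that r by auto
    hence "y \<in> closed_segment w v \<or> y \<in> closed_segment v z" using that PK by auto
    thus ?thesis
    proof
      assume "y \<in> closed_segment w v"
      then obtain t where "y - v = t *\<^sub>R (w - v)" using seg_left by blast
      hence "y = v + t *\<^sub>R (w - v)" by (simp add: algebra_simps)
      thus ?thesis using o1' by (simp add: inner_add_right)
    next
      assume "y \<in> closed_segment v z"
      then obtain t where t: "t \<ge> 0" "t \<le> 1" "y - v = t *\<^sub>R (z - v)" using seg_right by blast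
      hence "y = v + t *\<^sub>R (z - v)" by (simp add: algebra_simps)
      thus ?thesis using o2 t by (auto simp: inner_add_right k1_def)
    qed
  qed
  define N where "N = norm (w - v) + norm (z - v)"
  have N: "N > 0" using wv unfolding N_def by (simp add: add_pos_nonneg)
  define \<tau> where "\<tau> = min (1/2) (r / (4 * N))"
  have tau: "0 < \<tau>" "\<tau> < 1" using r N unfolding \<tau>_def by auto
  have tauN1: "\<tau> * norm (w - v) \<le> r / 4"
  proof -
    have "\<tau> * norm (w - v) \<le> (r / (4*N)) * N"
      using tau N unfolding \<tau>_def N_def by (intro mult_mono) auto
    thus ?thesis using N by simp
  qed
  have tauN2: "\<tau> * norm (z - v) \<le> r / 4"
  proof -
    have "\<tau> * norm (z - v) \<le> (r / (4*N)) * N"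
      using tau N unfolding \<tau>_def N_def by (intro mult_mono) auto
    thus ?thesis using N by simp
  qed
  define b1 where "b1 = v + \<tau> *\<^sub>R (w - v)"
  define b2 where "b2 = v + \<tau> *\<^sub>R (z - v)"
  have b1: "b1 \<in> open_segment w v"
    unfolding in_segment b1_def using wv tau
    by (intro conjI exI[of _ "1 - \<tau>"]) (auto simp: algebra_simps)
  have b2: "b2 \<in> open_segment v z"
    unfolding in_segment b2_def using zv tau
    by (intro conjI exI[of _ "\<tau>"]) (auto simp: algebra_simps)
  obtain d1 where d1: "d1 > 0" "\<And>\<epsilon>. 0 < \<epsilon> \<Longrightarrow> \<epsilon> < d1 \<Longrightarrow>
      b1 + \<epsilon> *\<^sub>R u1 \<in> outside P \<and> b1 - \<epsilon> *\<^sub>R u1 \<in> inside P"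
    using h1 b1 by blast
  obtain d2 where d2: "d2 > 0" "\<And>\<epsilon>. 0 < \<epsilon> \<Longrightarrow> \<epsilon> < d2 \<Longrightarrow>
      b2 + \<epsilon> *\<^sub>R u2 \<in> outside P \<and> b2 - \<epsilon> *\<^sub>R u2 \<in> inside P"
    using h2 b2 by blast
  have inb1: "b1 + e *\<^sub>R x \<in> ball v r" if "norm x = 1" "0 < e" "e < r/4" for e x
  proof -
    have "norm (\<tau> *\<^sub>R (w - v) + e *\<^sub>R x) \<le> \<tau> * norm (w - v) + e"
      using norm_triangle_ineq[of "\<tau> *\<^sub>R (w - v)" "e *\<^sub>R x"] tau that by simp
    moreover have "dist v (b1 + e *\<^sub>R x) = norm (\<tau> *\<^sub>R (w - v) + e *\<^sub>R x)"
      unfolding dist_norm norm_minus_commute[of v] b1_def by simp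
    ultimately show ?thesis using tauN1 that by simp
  qed
  have inb2: "b2 + e *\<^sub>R x \<in> ball v r" if "norm x = 1" "0 < e" "e < r/4" for e x
  proof -
    have "norm (\<tau> *\<^sub>R (z - v) + e *\<^sub>R x) \<le> \<tau> * norm (z - v) + e"
      using norm_triangle_ineq[of "\<tau> *\<^sub>R (z - v)" "e *\<^sub>R x"] tau that by simp
    moreover have "dist v (b2 + e *\<^sub>R x) = norm (\<tau> *\<^sub>R (z - v) + e *\<^sub>R x)"
      unfolding dist_norm norm_minus_commute[of v] b2_def by simp
    ultimately show ?thesis using tauN2 that by simp
  qed
  have f1b1: "u1 \<bullet> (b1 + e *\<^sub>R x) = u1 \<bullet> v + e * (u1 \<bullet> x)" for e x
    unfolding b1_def using o1' by (simp add: inner_add_right)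
  have f1b2: "u1 \<bullet> (b2 + e *\<^sub>R x) = u1 \<bullet> v + \<tau> * k1 + e * (u1 \<bullet> x)" for e x
    unfolding b2_def k1_def by (simp add: inner_add_right)
  have f2b2: "u2 \<bullet> (b2 + e *\<^sub>R x) = u2 \<bullet> v + e * (u2 \<bullet> x)" for e x
    unfolding b2_def using o2 by (simp add: inner_add_right)
  have cpos: "1 + c > 0"
  proof (rule ccontr)
    assume "\<not> 1 + c > 0"
    hence "(u1 + u2) \<bullet> (u1 + u2) \<le> 0" using uu1 uu2 unfolding c_def
      by (simp add: inner_add_left inner_add_right inner_commute)
    hence "(u1 + u2) \<bullet> (u1 + u2) = 0" using inner_ge_zero[of "u1 + u2"] by linarith
    hence "u1 + u2 = 0" by simp
    hence u2: "u2 = - u1" by (simp add: add_eq_0_iff)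
    hence k0: "k1 = 0" and cm: "c = -1" using o2 uu1 unfolding k1_def c_def by auto
    define e where "e = min (min d1 d2) (r/4) / 2"
    have e: "0 < e" "e < d1" "e < d2" "e < r/4" using d1 d2 r unfolding e_def by auto
    define S where "S = ball v r \<inter> {y. u1 \<bullet> y > u1 \<bullet> v}"
    have S: "convex S" unfolding S_def by (intro convex_Int convex_ball convex_halfspace_gt)
    have SP: "S \<inter> P = {}"
    proof (rule ccontr)
      assume "S \<inter> P \<noteq> {}"
      then obtain y where y: "y \<in> S" "y \<in> P" by blast
      thus False using D[of y] k0 unfolding S_def by auto
    qed
    have x1: "b1 + e *\<^sub>R u1 \<in> S" unfolding S_def using inb1[OF n1 e(1,4)] f1b1 uu1 e by auto
    have x2: "b2 + e *\<^sub>R (- u2) \<in> S" unfolding S_def using inb2[of "-u2" e] n2 f1b2[of e "-u2"] e k0 cm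
      by (auto simp: c_def)
    have "b2 + e *\<^sub>R (- u2) \<in> outside P"
      using transfer[OF S SP x1 x2] d1(2)[OF e(1,2)] by auto
    moreover have "b2 + e *\<^sub>R (- u2) \<in> inside P" using d2(2)[OF e(1,3)] by simp
    ultimately show False using inside_Int_outside by blast
  qed
  define \<delta> where "\<delta> = min (min d1 d2) (min (r/4) (if k1 = 0 then 1 else \<tau> * \<bar>k1\<bar>))"
  have \<delta>: "\<delta> > 0" using d1 d2 r tau unfolding \<delta>_def by auto
  have "v + e *\<^sub>R (u1 + u2) \<in> outside P \<and> v - e *\<^sub>R (u1 + u2) \<in> inside P"
    if e: "0 < e" "e < \<delta>" for e
  proof -
    have e1: "e < d1" "e < d2" "e < r/4" "k1 \<noteq> 0 \<Longrightarrow> e < \<tau> * \<bar>k1\<bar>"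
      using e unfolding \<delta>_def by (auto split: if_splits)
    have Xb: "v + e *\<^sub>R (u1 + u2) \<in> ball v r" "v - e *\<^sub>R (u1 + u2) \<in> ball v r"
    proof -
      have "norm (e *\<^sub>R (u1 + u2)) \<le> e * 2"
        using norm_triangle_ineq[of u1 u2] n1 n2 e by simp
      thus "v + e *\<^sub>R (u1 + u2) \<in> ball v r" "v - e *\<^sub>R (u1 + u2) \<in> ball v r"
        using e1 r by (auto simp: dist_norm)
    qed
    have X1: "u1 \<bullet> (v + e *\<^sub>R (u1 + u2)) = u1 \<bullet> v + e * (1 + c)"
         "u2 \<bullet> (v + e *\<^sub>R (u1 + u2)) = u2 \<bullet> v + e * (1 + c)"
         "u1 \<bullet> (v - e *\<^sub>R (u1 + u2)) = u1 \<bullet> v - e * (1 + c)"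
         "u2 \<bullet> (v - e *\<^sub>R (u1 + u2)) = u2 \<bullet> v - e * (1 + c)"
      using uu1 uu2 unfolding c_def
      by (simp_all add: inner_add_right inner_diff_right inner_commute algebra_simps)
    have pc: "e * (1 + c) > 0" using e cpos by simp
    have out: "v + e *\<^sub>R (u1 + u2) \<in> outside P"
    proof (cases "k1 \<le> 0")
      case True
      define S where "S = ball v r \<inter> {y. u1 \<bullet> y > u1 \<bullet> v}"
      have S: "convex S" unfolding S_def by (intro convex_Int convex_ball convex_halfspace_gt)
      have SP: "S \<inter> P = {}"
      proof (rule ccontr)
        assume "S \<inter> P \<noteq> {}"
        then obtain y where y: "y \<in> S" "y \<in> P" by blast
        then obtain t where "t \<ge> 0" "u1 \<bullet> y = u1 \<bullet> v \<or> u1 \<bullet> y = u1 \<bullet> v + t * k1"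
          using D[of y] unfolding S_def by auto
        moreover have "t * k1 \<le> 0" using True \<open>t \<ge> 0\<close> by (simp add: mult_nonneg_nonpos)
        ultimately show False using y unfolding S_def by auto
      qed
      have x1: "b1 + e *\<^sub>R u1 \<in> S" unfolding S_def using inb1[OF n1 e(1) e1(3)] f1b1 uu1 e by auto
      have x2: "v + e *\<^sub>R (u1 + u2) \<in> S" unfolding S_def using Xb X1 pc by auto
      show ?thesis using transfer[OF S SP x1 x2] d1(2)[OF e(1) e1(1)] by auto
    next
      case False
      define S where "S = ball v r \<inter> {y. u1 \<bullet> y > u1 \<bullet> v} \<inter> {y. u2 \<bullet> y > u2 \<bullet> v}"
      have S: "convex S" unfolding S_def by (intro convex_Int convex_ball convex_halfspace_gt)
      have SP: "S \<inter> P = {}"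
      proof (rule ccontr)
        assume "S \<inter> P \<noteq> {}"
        then obtain y where y: "y \<in> S" "y \<in> P" by blast
        thus False using D[of y] unfolding S_def by auto
      qed
      have "e * c \<ge> - e" using mult_left_mono[of "-1" c e] cabs e by simp
      hence "\<tau> * k1 + e * c > 0" using e1(4) False by auto
      hence x1: "b2 + e *\<^sub>R u2 \<in> S" unfolding S_def
        using inb2[OF n2 e(1) e1(3)] f1b2 f2b2 uu2 e by (auto simp: c_def)
      have x2: "v + e *\<^sub>R (u1 + u2) \<in> S" unfolding S_def using Xb X1 pc by auto
      show ?thesis using transfer[OF S SP x1 x2] d2(2)[OF e(1) e1(2)] by auto
    qed
    have inn: "v - e *\<^sub>R (u1 + u2) \<in> inside P"
    proof (cases "k1 \<ge> 0")
      case True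
      define S where "S = ball v r \<inter> {y. u1 \<bullet> y < u1 \<bullet> v}"
      have S: "convex S" unfolding S_def by (intro convex_Int convex_ball convex_halfspace_lt)
      have SP: "S \<inter> P = {}"
      proof (rule ccontr)
        assume "S \<inter> P \<noteq> {}"
        then obtain y where y: "y \<in> S" "y \<in> P" by blast
        then obtain t where "t \<ge> 0" "u1 \<bullet> y = u1 \<bullet> v \<or> u1 \<bullet> y = u1 \<bullet> v + t * k1"
          using D[of y] unfolding S_def by auto
        moreover have "t * k1 \<ge> 0" using True \<open>t \<ge> 0\<close> by simp
        ultimately show False using y unfolding S_def by auto
      qed
      have x1: "b1 + e *\<^sub>R (- u1) \<in> S" unfolding S_def
        using inb1[of "-u1" e] n1 e e1(3) f1b1[of e "-u1"] uu1 by auto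
      have x2: "v - e *\<^sub>R (u1 + u2) \<in> S" unfolding S_def using Xb X1 pc by auto
      show ?thesis using transfer[OF S SP x1 x2] d1(2)[OF e(1) e1(1)] by auto
    next
      case False
      define S where "S = ball v r \<inter> {y. u1 \<bullet> y < u1 \<bullet> v} \<inter> {y. u2 \<bullet> y < u2 \<bullet> v}"
      have S: "convex S" unfolding S_def by (intro convex_Int convex_ball convex_halfspace_lt)
      have SP: "S \<inter> P = {}"
      proof (rule ccontr)
        assume "S \<inter> P \<noteq> {}"
        then obtain y where y: "y \<in> S" "y \<in> P" by blast
        thus False using D[of y] unfolding S_def by auto
      qed
      have "e * c \<ge> - e" using mult_left_mono[of "-1" c e] cabs e by simp
      hence "\<tau> * k1 - e * c < 0" using e1(4) False by auto
      hence x1: "b2 + e *\<^sub>R (- u2) \<in> S" unfolding S_def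
        using inb2[of "-u2" e] n2 e e1(3) f1b2[of e "-u2"] f2b2[of e "-u2"] uu2 by (auto simp: c_def)
      have x2: "v - e *\<^sub>R (u1 + u2) \<in> S" unfolding S_def using Xb X1 pc by auto
      show ?thesis using transfer[OF S SP x1 x2] d2(2)[OF e(1) e1(2)] by auto
    qed
    show ?thesis using out inn by blast
  qed
  thus ?thesis using \<delta> by blast
qed


lemma finite_delta:
  fixes Q :: "'a \<Rightarrow> real \<Rightarrow> bool"
  assumes "finite A" "\<forall>i\<in>A. \<exists>\<delta>>0. \<forall>\<epsilon>. 0 < \<epsilon> \<and> \<epsilon> < \<delta> \<longrightarrow> Q i \<epsilon>"
  shows "\<exists>\<delta>>0. \<forall>\<epsilon>. 0 < \<epsilon> \<and> \<epsilon> < \<delta> \<longrightarrow> (\<forall>i\<in>A. Q i \<epsilon>)"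
  using assms
proof (induction A rule: finite_induct)
  case empty thus ?case by (intro exI[of _ 1]) auto
next
  case (insert x F)
  then obtain d1 where d1: "d1 > 0" "\<forall>\<epsilon>. 0 < \<epsilon> \<and> \<epsilon> < d1 \<longrightarrow> (\<forall>i\<in>F. Q i \<epsilon>)" by auto
  obtain d2 where d2: "d2 > 0" "\<forall>\<epsilon>. 0 < \<epsilon> \<and> \<epsilon> < d2 \<longrightarrow> Q x \<epsilon>" using insert.prems by auto
  show ?case using d1 d2 by (intro exI[of _ "min d1 d2"]) auto
qed

theorem lemma3p1:
  fixes n :: nat and p u :: "nat \<Rightarrow> real^2"
  assumes "3 \<le> n"
    and "simple_polygon n p"
    and "\<forall>i\<in>{1..n}. norm (u i) = 1 \<and> u i \<bullet> (p (i mod n) - p ((i + n - 1) mod n)) = 0"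
    and "\<forall>i\<in>{1..n}. \<forall>b\<in>open_segment (p ((i + n - 1) mod n)) (p (i mod n)).
           \<exists>\<delta>>0. \<forall>\<epsilon>. 0 < \<epsilon> \<and> \<epsilon> < \<delta> \<longrightarrow>
             b + \<epsilon> *\<^sub>R u i \<in> outside (polygon_set n p) \<and>
             b - \<epsilon> *\<^sub>R u i \<in> inside (polygon_set n p)"
  shows "\<exists>\<delta>>0. \<forall>\<epsilon>. 0 < \<epsilon> \<and> \<epsilon> < \<delta> \<longrightarrow>
           (\<forall>i\<in>{1..n}.
              p (i mod n) + \<epsilon> *\<^sub>R (u i + u (i mod n + 1)) \<in> outside (polygon_set n p) \<and>
              p (i mod n) - \<epsilon> *\<^sub>R (u i + u (i mod n + 1)) \<in> inside (polygon_set n p))"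
proof -
  have "\<forall>i\<in>{1..n}. \<exists>\<delta>>0. \<forall>\<epsilon>. 0 < \<epsilon> \<and> \<epsilon> < \<delta> \<longrightarrow>
              p (i mod n) + \<epsilon> *\<^sub>R (u i + u (i mod n + 1)) \<in> outside (polygon_set n p) \<and>
              p (i mod n) - \<epsilon> *\<^sub>R (u i + u (i mod n + 1)) \<in> inside (polygon_set n p)"
  proof
  fix i assume i: "i \<in> {1..n}"
  have n0: "0 < n" "2 \<le> n" using assms(1) by auto
  have sp: "inj_on p {..<n}"
    "\<forall>i\<in>{1..n}. poly_edge n p i \<inter> poly_edge n p (i mod n + 1) = {p (i mod n)}"
    "\<forall>i\<in>{1..n}. \<forall>j\<in>{1..n}. i \<noteq> j \<and> j \<noteq> i mod n + 1 \<and> i \<noteq> j mod n + 1 \<longrightarrow>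
          poly_edge n p i \<inter> poly_edge n p j = {}"
    using assms(2) unfolding simple_polygon_def by auto
  define i2 where "i2 = i mod n + 1"
  have i2: "i2 \<in> {1..n}" using n0 unfolding i2_def by (simp add: Suc_leI)
  define v where "v = p (i mod n)"
  define w where "w = p ((i + n - 1) mod n)"
  define z where "z = p (i2 mod n)"
  have i2pred: "(i2 + n - 1) mod n = i mod n" unfolding i2_def using A1 n0 by simp
  have E1: "poly_edge n p i = closed_segment w v" unfolding poly_edge_def v_def w_def ..
  have E2: "poly_edge n p i2 = closed_segment v z" unfolding poly_edge_def v_def z_def i2pred ..
  define K where "K = (\<Union>j\<in>{1..n} - {i, i2}. poly_edge n p j)"
  have Kc: "closed K" unfolding K_def poly_edge_def by (intro closed_UN) auto
  have injm: "p (a mod n) = p (b mod n) \<Longrightarrow> a mod n = b mod n" for a b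
    by (rule inj_onD[OF sp(1)]) (use n0 in auto)
  have wv: "w \<noteq> v" unfolding w_def v_def using injm[of "i + n - 1" i] A2[OF n0(2) i]
    by auto
  have zv: "z \<noteq> v" unfolding z_def v_def i2_def
    using injm[of "i mod n + 1" i] A3[of "i mod n" n] n0 by auto
  have vK: "v \<notin> K"
  proof
    assume "v \<in> K"
    then obtain j where j: "j \<in> {1..n}" "j \<noteq> i" "j \<noteq> i2" "v \<in> poly_edge n p j"
      unfolding K_def by blast
    have vi: "v \<in> poly_edge n p i" unfolding E1 by simp
    show False
    proof (cases "i = j mod n + 1")
      case True
      hence "v \<in> {p (j mod n)}" using sp(2) j vi by blast
      hence "p (i mod n) = p (j mod n)" unfolding v_def by simp
      hence "i mod n = j mod n" using injm[of i j] by simp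
      thus False using True A3[of "j mod n" n] n0 by simp
    next
      case False
      have "i \<noteq> j \<and> j \<noteq> i mod n + 1 \<and> i \<noteq> j mod n + 1" using j False unfolding i2_def by auto
      hence "poly_edge n p i \<inter> poly_edge n p j = {}" using sp(3) i j(1) by auto
      thus False using vi j by blast
    qed
  qed
  have PK: "polygon_set n p \<subseteq> closed_segment w v \<union> closed_segment v z \<union> K"
  proof
    fix x assume "x \<in> polygon_set n p"
    then obtain j where j: "j \<in> {1..n}" "x \<in> poly_edge n p j" unfolding polygon_set_def by auto
    show "x \<in> closed_segment w v \<union> closed_segment v z \<union> K"
    proof (cases "j = i \<or> j = i2")
      case True thus ?thesis using j E1 E2 by auto
    next
      case False thus ?thesis using j unfolding K_def by auto
    qed
  qed
  have u1: "norm (u i) = 1" "u i \<bullet> (v - w) = 0" using assms(3) i unfolding v_def w_def by auto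
  have u2: "norm (u i2) = 1" "u i2 \<bullet> (z - v) = 0"
  proof -
    have "norm (u i2) = 1 \<and> u i2 \<bullet> (p (i2 mod n) - p ((i2 + n - 1) mod n)) = 0"
      using bspec[OF assms(3) i2] .
    thus "norm (u i2) = 1" "u i2 \<bullet> (z - v) = 0" unfolding i2pred v_def z_def by auto
  qed
  have h1: "\<forall>b\<in>open_segment w v. \<exists>\<delta>>0. \<forall>\<epsilon>. 0 < \<epsilon> \<and> \<epsilon> < \<delta> \<longrightarrow>
               b + \<epsilon> *\<^sub>R u i \<in> outside (polygon_set n p) \<and> b - \<epsilon> *\<^sub>R u i \<in> inside (polygon_set n p)"
    using bspec[OF assms(4) i] unfolding v_def w_def .
  have h2: "\<forall>b\<in>open_segment v z. \<exists>\<delta>>0. \<forall>\<epsilon>. 0 < \<epsilon> \<and> \<epsilon> < \<delta> \<longrightarrow>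
               b + \<epsilon> *\<^sub>R u i2 \<in> outside (polygon_set n p) \<and> b - \<epsilon> *\<^sub>R u i2 \<in> inside (polygon_set n p)"
    using bspec[OF assms(4) i2] unfolding v_def z_def i2pred .
  show "\<exists>\<delta>>0. \<forall>\<epsilon>. 0 < \<epsilon> \<and> \<epsilon> < \<delta> \<longrightarrow>
              p (i mod n) + \<epsilon> *\<^sub>R (u i + u (i mod n + 1)) \<in> outside (polygon_set n p) \<and>
              p (i mod n) - \<epsilon> *\<^sub>R (u i + u (i mod n + 1)) \<in> inside (polygon_set n p)"
    using vertex_local[OF Kc vK PK wv zv u1(1) u2(1) u1(2) u2(2) h1 h2]
    unfolding v_def i2_def .
  qed
  from finite_delta[OF _ this] show ?thesis by simp
qed

end
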